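(* Let $V$ be a finite vector space over a finite field and let $d$ be an integral metric on $V$. Then $d$ is convex if and only if $d$ is both correction-normal and equal-detection-normal.
   Context: An integral metric on $V$ is a metric $d:V\times V\to\mathbb{N}\cup\{\infty\}$ (non-negative, $d(x,y)=0\iff x=y$, symmetric, triangle inequality). For $v\in V$ and $\rho\in\mathbb{N}$ put $B_\rho(v)=\{x: d(v,x)\le\rho\}$, $S_\rho(v)=\{x:d(v,x)=\rho\}$, and $B_{-1}(v)=\emptyset$. The metric $d$ is (integrally) convex if for all $v_1,v_2\in V$ with $d(v_1,v_2)<\infty$ and all $i\in\{0,1,\dots,d(v_1,v_2)\}$ there exists $x\in V$ with $d(v_1,x)=i$ and $d(x,v_2)=d(v_1,v_2)-i$. For distinct $v_1,v_2$, the correction capability $\tau(v_1,v_2)$ is the largest integer $\tau$ with $B_\tau(v_1)\cap B_\tau(v_2)=\emptyset$; $d$ is correction-normal if $\tau(v_1,v_2)=\lfloor (d(v_1,v_2)-1)/2\rfloor$ for all distinct $v_1,v_2$. The equal-detection threshold $\sigma_{\mathrm{eq}}(v_1,v_2)$ is the unique $s\in\mathbb{N}$ (if it exists) with $B_s(v_1)\cap B_{s-1}(v_2)=B_{s-1}(v_1)\cap B_s(v_2)=\emptyset$ and $S_s(v_1)\cap S_s(v_2)\neq\emptyset$, and $\sigma_{\mathrm{eq}}(v_1,v_2)=0$ if no such $s$ exists; $d$ is equal-detection-normal if $d(v_1,v_2)=2\sigma_{\mathrm{eq}}(v_1,v_2)$ for all $v_1,v_2$ with $\sigma_{\mathrm{eq}}(v_1,v_2)\neq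 0$. *)

theory Defs
  imports Main "HOL-Library.Extended_Nat"
begin

definition integral_metric :: "('v \<Rightarrow> 'v \<Rightarrow> enat) \<Rightarrow> bool" where
  "integral_metric d \<longleftrightarrow>
     (\<forall>x y. d x y = 0 \<longleftrightarrow> x = y) \<and>
     (\<forall>x y. d x y = d y x) \<and>
     (\<forall>x y z. d x z \<le> d x y + d y z)"

text \<open>Closed ball of integer radius; radius -1 (any negative radius) gives the empty set.\<close>
definition mball :: "('v \<Rightarrow> 'v \<Rightarrow> enat) \<Rightarrow> int \<Rightarrow> 'v \<Rightarrow> 'v set" where
  "mball d r v = {x. 0 \<le> r \<and> d v x \<le> enat (nat r)}"

definition msphere :: "('v \<Rightarrow> 'v \<Rightarrow> enat) \<Rightarrow> nat \<Rightarrow> 'v \<Rightarrow> 'v set" where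
  "msphere d r v = {x. d v x = enat r}"

definition convex_metric :: "('v \<Rightarrow> 'v \<Rightarrow> enat) \<Rightarrow> bool" where
  "convex_metric d \<longleftrightarrow>
     (\<forall>v1 v2 n. d v1 v2 = enat n \<longrightarrow>
        (\<forall>i\<le>n. \<exists>x. d v1 x = enat i \<and> d x v2 = enat (n - i)))"

definition is_correction_capability :: "('v \<Rightarrow> 'v \<Rightarrow> enat) \<Rightarrow> 'v \<Rightarrow> 'v \<Rightarrow> int \<Rightarrow> bool" where
  "is_correction_capability d v1 v2 t \<longleftrightarrow>
     mball d t v1 \<inter> mball d t v2 = {} \<and>
     (\<forall>t'. mball d t' v1 \<inter> mball d t' v2 = {} \<longrightarrow> t' \<le> t)"

text \<open>For infinite distance both sides are read as infinity: all balls are disjoint.\<close>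
definition correction_normal :: "('v \<Rightarrow> 'v \<Rightarrow> enat) \<Rightarrow> bool" where
  "correction_normal d \<longleftrightarrow>
     (\<forall>v1 v2. v1 \<noteq> v2 \<longrightarrow>
        (case d v1 v2 of
           enat n \<Rightarrow> is_correction_capability d v1 v2 ((int n - 1) div 2)
         | \<infinity> \<Rightarrow> (\<forall>t. mball d t v1 \<inter> mball d t v2 = {})))"

definition eq_detect_cond :: "('v \<Rightarrow> 'v \<Rightarrow> enat) \<Rightarrow> 'v \<Rightarrow> 'v \<Rightarrow> nat \<Rightarrow> bool" where
  "eq_detect_cond d v1 v2 s \<longleftrightarrow>
     mball d (int s) v1 \<inter> mball d (int s - 1) v2 = {} \<and>
     mball d (int s - 1) v1 \<inter> mball d (int s) v2 = {} \<and>
     msphere d s v1 \<inter> msphere d s v2 \<noteq> {}"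

definition sigma_eq :: "('v \<Rightarrow> 'v \<Rightarrow> enat) \<Rightarrow> 'v \<Rightarrow> 'v \<Rightarrow> nat" where
  "sigma_eq d v1 v2 =
     (if \<exists>!s. eq_detect_cond d v1 v2 s then THE s. eq_detect_cond d v1 v2 s else 0)"

definition eq_detection_normal :: "('v \<Rightarrow> 'v \<Rightarrow> enat) \<Rightarrow> bool" where
  "eq_detection_normal d \<longleftrightarrow>
     (\<forall>v1 v2. sigma_eq d v1 v2 \<noteq> 0 \<longrightarrow> d v1 v2 = enat (2 * sigma_eq d v1 v2))"

end

theory Submission
  imports Defs
begin

context
  fixes d :: "'v \<Rightarrow> 'v \<Rightarrow> enat"
  assumes M: "integral_metric d"
begin

lemma msym: "d x y = d y x"
  using M unfolding integral_metric_def by blast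

lemma mtri: "d x z \<le> d x y + d y z"
  using M unfolding integral_metric_def by blast

lemma mzero: "d x x = 0"
  using M unfolding integral_metric_def by blast

lemma mfin: "d x y \<le> enat k \<Longrightarrow> \<exists>c. d x y = enat c \<and> c \<le> k"
  by (cases "d x y") auto

lemma tri_nat: "d x y \<le> enat p \<Longrightarrow> d y z \<le> enat q \<Longrightarrow> d x z \<le> enat (p+q)"
proof -
  assume a: "d x y \<le> enat p" "d y z \<le> enat q"
  have "d x z \<le> d x y + d y z" by (rule mtri)
  also have "\<dots> \<le> enat p + enat q" using a by (intro add_mono)
  finally show ?thesis by simp
qed

lemma tri_eq: "d x y = enat p \<Longrightarrow> d x z = enat q \<Longrightarrow> d z y = enat c \<Longrightarrow> p \<le> q + c"
proof -
  assume a: "d x y = enat p" "d x z = enat q" "d z y = enat c"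
  have "d x y \<le> d x z + d z y" by (rule mtri)
  then show ?thesis using a by simp
qed

lemma mball_iff: "x \<in> mball d r v \<longleftrightarrow> 0 \<le> r \<and> d v x \<le> enat (nat r)"
  unfolding mball_def by simp

lemma msphere_iff: "x \<in> msphere d r v \<longleftrightarrow> d v x = enat r"
  unfolding msphere_def by simp

lemma conv_cn:
  assumes C: "convex_metric d"
  shows "correction_normal d"
  unfolding correction_normal_def
proof (intro allI impI)
  fix v1 v2 :: 'v assume ne: "v1 \<noteq> v2"
  show "case d v1 v2 of enat n \<Rightarrow> is_correction_capability d v1 v2 ((int n - 1) div 2)
         | \<infinity> \<Rightarrow> (\<forall>t. mball d t v1 \<inter> mball d t v2 = {})"
  proof (cases "d v1 v2")
    case (enat n)
    have n1: "n \<ge> 1" using ne enat M unfolding integral_metric_def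
      by (metis enat_0 enat.inject less_one not_le)
    have disj: "mball d t v1 \<inter> mball d t v2 = {}" if "2 * t < int n" for t
    proof (rule ccontr)
      assume "mball d t v1 \<inter> mball d t v2 \<noteq> {}"
      then obtain x where "x \<in> mball d t v1" "x \<in> mball d t v2" by blast
      then have h: "0 \<le> t" "d v1 x \<le> enat (nat t)" "d v2 x \<le> enat (nat t)"
        by (auto simp: mball_iff)
      have "d x v2 \<le> enat (nat t)" using h msym by metis
      then have "d v1 v2 \<le> enat (nat t + nat t)" using h tri_nat by blast
      then show False using enat that h by simp
    qed
    have "is_correction_capability d v1 v2 ((int n - 1) div 2)"
      unfolding is_correction_capability_def
    proof (intro conjI allI impI)
      show "mball d ((int n - 1) div 2) v1 \<inter> mball d ((int n - 1) div 2) v2 = {}"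
        by (rule disj) linarith
    next
      fix t' assume dj: "mball d t' v1 \<inter> mball d t' v2 = {}"
      show "t' \<le> (int n - 1) div 2"
      proof (rule ccontr)
        assume "\<not> t' \<le> (int n - 1) div 2"
        then have t': "0 \<le> t'" "int n \<le> 2 * t'" by linarith+
        obtain x where x: "d v1 x = enat (n div 2)" "d x v2 = enat (n - n div 2)"
          using C enat unfolding convex_metric_def by (meson div_le_dividend)
        have "x \<in> mball d t' v1" using x t' by (auto simp: mball_iff)
        moreover have "x \<in> mball d t' v2" using x t' msym[of v2 x] by (auto simp: mball_iff)
        ultimately show False using dj by blast
      qed
    qed
    then show ?thesis using enat by simp
  next
    case infinity
    have "mball d t v1 \<inter> mball d t v2 = {}" for t
    proof (rule ccontr)
      assume "mball d t v1 \<inter> mball d t v2 \<noteq> {}"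
      then obtain x where "x \<in> mball d t v1" "x \<in> mball d t v2" by blast
      then have h: "0 \<le> t" "d v1 x \<le> enat (nat t)" "d v2 x \<le> enat (nat t)"
        by (auto simp: mball_iff)
      have "d x v2 \<le> enat (nat t)" using h msym by metis
      then have "d v1 v2 \<le> enat (nat t + nat t)" using h tri_nat by blast
      then show False using infinity by simp
    qed
    then show ?thesis using infinity by simp
  qed
qed

lemma conv_ed:
  assumes C: "convex_metric d"
  shows "eq_detection_normal d"
  unfolding eq_detection_normal_def
proof (intro allI impI)
  fix v1 v2 assume s0: "sigma_eq d v1 v2 \<noteq> 0"
  define s where "s = sigma_eq d v1 v2"
  have ex: "\<exists>!s. eq_detect_cond d v1 v2 s" using s0 unfolding sigma_eq_def by (metis)
  then have cs: "eq_detect_cond d v1 v2 s" unfolding s_def sigma_eq_def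
    by (simp add: theI')
  have s1: "s \<ge> 1" using s0 s_def by simp
  from cs obtain w where w: "d v1 w = enat s" "d v2 w = enat s"
    unfolding eq_detect_cond_def by (auto simp: msphere_iff)
  have "d w v2 = enat s" using w msym by metis
  then have "d v1 v2 \<le> enat (s + s)" using w tri_nat by (metis order_refl)
  then obtain n where n: "d v1 v2 = enat n" "n \<le> s + s" using mfin by blast
  have "n = s + s"
  proof (rule ccontr)
    assume "n \<noteq> s + s"
    then have ns: "n < s + s" using n by simp
    obtain x where x: "d v1 x = enat (min s n)" "d x v2 = enat (n - min s n)"
      using C n unfolding convex_metric_def by (meson min.cobounded2)
    have "x \<in> mball d (int s) v1" using x by (auto simp: mball_iff)
    moreover have "x \<in> mball d (int s - 1) v2" using x s1 ns msym[of v2 x]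
      by (auto simp: mball_iff)
    ultimately show False using cs unfolding eq_detect_cond_def by blast
  qed
  then show "d v1 v2 = enat (2 * sigma_eq d v1 v2)" using n s_def by simp
qed

lemma mid:
  assumes CN: "correction_normal d" and ED: "eq_detection_normal d"
    and n: "d v1 v2 = enat n" and n2: "n \<ge> 2"
  shows "\<exists>w k. 0 < k \<and> k < n \<and> d v1 w = enat k \<and> d w v2 = enat (n - k)"
proof (rule ccontr)
  assume N: "\<not> ?thesis"
  have N': False if "d v1 w = enat a" "d w v2 = enat b" "a + b = n" "0 < a" "a < n" for w a b
    using N that by (metis add_diff_cancel_left')
  define r where "r = (n + 1) div 2"
  have ne: "v1 \<noteq> v2" using n n2 mzero by (metis enat_0 enat.inject not_numeral_le_zero)
  have cc: "is_correction_capability d v1 v2 ((int n - 1) div 2)"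
  proof -
    have "case d v1 v2 of enat n \<Rightarrow> is_correction_capability d v1 v2 ((int n - 1) div 2)
         | \<infinity> \<Rightarrow> (\<forall>t. mball d t v1 \<inter> mball d t v2 = {})"
      using CN ne unfolding correction_normal_def by blast
    then show ?thesis using n by simp
  qed
  have "mball d (int r) v1 \<inter> mball d (int r) v2 \<noteq> {}"
  proof
    assume "mball d (int r) v1 \<inter> mball d (int r) v2 = {}"
    then have "int r \<le> (int n - 1) div 2" using cc unfolding is_correction_capability_def by blast
    then show False unfolding r_def by linarith
  qed
  then obtain x where "x \<in> mball d (int r) v1" "x \<in> mball d (int r) v2" by blast
  then have "d v1 x \<le> enat r" "d x v2 \<le> enat r" using msym[of v2 x] by (auto simp: mball_iff)
  then obtain a b where ab: "d v1 x = enat a" "d x v2 = enat b" "a \<le> r" "b \<le> r"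
    using mfin by meson
  have nab: "n \<le> a + b" using tri_eq[OF n ab(1,2)] .
  have "a + b \<noteq> n"
  proof
    assume "a + b = n"
    then show False using N'[OF ab(1,2)] ab(3,4) n2 unfolding r_def by linarith
  qed
  then have ar: "a = r" "b = r" "2 * r = n + 1" using nab ab(3,4) unfolding r_def by linarith+
  have cond: "eq_detect_cond d v1 v2 s \<longleftrightarrow> s = r" for s
  proof
    assume cs: "eq_detect_cond d v1 v2 s"
    from cs obtain w where w: "d v1 w = enat s" "d v2 w = enat s"
      unfolding eq_detect_cond_def by (auto simp: msphere_iff)
    have "d w v2 = enat s" using w msym by metis
    then have "n \<le> s + s" using tri_eq[OF n w(1)] by blast
    then have "r \<le> s" using ar by linarith
    moreover have "\<not> r < s"
    proof
      assume "r < s"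
      then have "x \<in> mball d (int s) v1 \<inter> mball d (int s - 1) v2"
        using ab ar msym[of v2 x] by (auto simp: mball_iff)
      then show False using cs unfolding eq_detect_cond_def by blast
    qed
    ultimately show "s = r" by simp
  next
    assume sr: "s = r"
    have d1: "mball d (int r) v1 \<inter> mball d (int r - 1) v2 = {}"
    proof (rule ccontr)
      assume "mball d (int r) v1 \<inter> mball d (int r - 1) v2 \<noteq> {}"
      then obtain w where "w \<in> mball d (int r) v1" "w \<in> mball d (int r - 1) v2" by blast
      then have "d v1 w \<le> enat r" "d w v2 \<le> enat (r - 1)" "r \<ge> 1"
        using msym[of v2 w] by (auto simp: mball_iff nat_diff_distrib)
      then obtain a' b' where ab': "d v1 w = enat a'" "d w v2 = enat b'" "a' \<le> r" "b' \<le> r - 1"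
        using mfin by meson
      have "n \<le> a' + b'" using tri_eq[OF n ab'(1,2)] .
      then show False using N'[OF ab'(1,2)] ab' ar n2 by linarith
    qed
    have d2: "mball d (int r - 1) v1 \<inter> mball d (int r) v2 = {}"
    proof (rule ccontr)
      assume "mball d (int r - 1) v1 \<inter> mball d (int r) v2 \<noteq> {}"
      then obtain w where "w \<in> mball d (int r - 1) v1" "w \<in> mball d (int r) v2" by blast
      then have "d v1 w \<le> enat (r - 1)" "d w v2 \<le> enat r" "r \<ge> 1"
        using msym[of v2 w] by (auto simp: mball_iff nat_diff_distrib)
      then obtain a' b' where ab': "d v1 w = enat a'" "d w v2 = enat b'" "a' \<le> r - 1" "b' \<le> r"
        using mfin by meson
      have "n \<le> a' + b'" using tri_eq[OF n ab'(1,2)] .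
      then show False using N'[OF ab'(1,2)] ab' ar n2 by linarith
    qed
    have "x \<in> msphere d r v1 \<inter> msphere d r v2"
      using ab ar msym[of v2 x] by (auto simp: msphere_iff)
    then show "eq_detect_cond d v1 v2 s" using d1 d2 sr unfolding eq_detect_cond_def by auto
  qed
  then have "sigma_eq d v1 v2 = r" unfolding sigma_eq_def by auto
  moreover have "r \<noteq> 0" using ar by linarith
  ultimately have "d v1 v2 = enat (2 * r)" using ED unfolding eq_detection_normal_def by metis
  then show False using n ar by simp
qed

lemma normal_conv:
  assumes CN: "correction_normal d" and ED: "eq_detection_normal d"
  shows "convex_metric d"
proof -
  have "\<forall>v1 v2. d v1 v2 = enat n \<longrightarrow> (\<forall>i\<le>n. \<exists>x. d v1 x = enat i \<and> d x v2 = enat (n - i))" for n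
  proof (induction n rule: less_induct)
    case (less n)
    show ?case
    proof (intro allI impI)
      fix v1 v2 i assume n: "d v1 v2 = enat n" and i: "i \<le> n"
      show "\<exists>x. d v1 x = enat i \<and> d x v2 = enat (n - i)"
      proof (cases "n < 2")
        case True
        then have "i = 0 \<or> i = n" using i by linarith
        then show ?thesis
        proof
          assume "i = 0" then show ?thesis using n mzero by (metis diff_zero enat_0)
        next
          assume "i = n" then show ?thesis using n mzero by (metis diff_self_eq_0 enat_0)
        qed
      next
        case False
        then obtain w k where wk: "0 < k" "k < n" "d v1 w = enat k" "d w v2 = enat (n - k)"
          using mid[OF CN ED n] by auto
        show ?thesis
        proof (cases "i \<le> k")
          case True
          obtain x where x: "d v1 x = enat i" "d x w = enat (k - i)"
            using less.IH[OF wk(2)] wk(3) True by blast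
          have "d x v2 \<le> enat (k - i + (n - k))" using tri_nat x wk by (metis order_refl)
          then obtain c where c: "d x v2 = enat c" "c \<le> k - i + (n - k)" using mfin by blast
          have "n \<le> i + c" using tri_eq[OF n x(1) c(1)] .
          then have "c = n - i" using c wk True by linarith
          then show ?thesis using x c by blast
        next
          case False
          have "n - k < n" using wk by linarith
          moreover have "i - k \<le> n - k" using i by linarith
          ultimately obtain y where y: "d w y = enat (i - k)" "d y v2 = enat (n - k - (i - k))"
            using less.IH[of "n - k"] wk(4) by blast
          have "d v1 y \<le> enat (k + (i - k))" using tri_nat y wk by (metis order_refl)
          then obtain c where c: "d v1 y = enat c" "c \<le> k + (i - k)" using mfin by blast
          have "n - k - (i - k) = n - i" using False i by linarith
          then have y2: "d y v2 = enat (n - i)" using y by simp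
          have "n \<le> c + (n - i)" using tri_eq[OF n c(1) y2] .
          then have "c = i" using c False i by linarith
          then show ?thesis using c y2 by blast
        qed
      qed
    qed
  qed
  then show ?thesis unfolding convex_metric_def by blast
qed

end

theorem proposition3p1:
  fixes scale :: "'f::field \<Rightarrow> 'v::ab_group_add \<Rightarrow> 'v"
    and d :: "'v \<Rightarrow> 'v \<Rightarrow> enat"
  assumes "vector_space scale"
    and "finite (UNIV :: 'f set)"
    and "finite (UNIV :: 'v set)"
    and "integral_metric d"
  shows "convex_metric d \<longleftrightarrow> correction_normal d \<and> eq_detection_normal d"
  using conv_cn[OF assms(4)] conv_ed[OF assms(4)] normal_conv[OF assms(4)] by blast

end
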